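(* Let $q>1$, $p=\frac{q}{q-1}$, and assume Hypothesis (H$_q$). Then for all $x\in[a,b]$ and $\lambda\in[0,1]$, $$\Big|(1-\lambda)f(mx)+\lambda\frac{(x-a)f(ma)+(b-x)f(mb)}{b-a}-\frac{1}{m(b-a)}\int_{ma}^{mb}f(t)\,dt\Big|\le\frac{mA_4(1,\lambda,p)^{\frac1p}}{b-a}\Big\{(x-a)^2\Big(\frac{|f'(mx)|^q+\alpha m|f'(a)|^q}{\alpha+1}\Big)^{\frac1q}+(b-x)^2\Big(\frac{|f'(mx)|^q+\alpha m|f'(b)|^q}{\alpha+1}\Big)^{\frac1q}\Big\}.$$
   Context: $(\alpha,m)$-convexity: for $(\alpha,m)\in[0,1]\times(0,1]$ and an interval $K\subseteq[0,\infty)$, a function $g:K\to\mathbb{R}$ is $(\alpha,m)$-convex on $K$ if $g(tX+m(1-t)Y)\le t^\alpha g(X)+m(1-t^\alpha)g(Y)$ for all $X,Y\in K$ and $t\in[0,1]$ with $tX+m(1-t)Y\in K$ (convention $0^0=1$). Hypothesis (H$_q$): $I\subseteq[0,\infty)$ is an interval, $f:I\to\mathbb{R}$ is differentiable on the interior $I^\circ$, $m\in(0,1]$, $\alpha\in[0,1]$, $a<b$ with $ma,b\in I^\circ$, $f'$ is Lebesgue integrable on $[ma,mb]$, and $|f'|^q$ is $(\alpha,m)$-convex on $[ma,b]$. $\beta(u,v)=\int_0^1t^{u-1}(1-t)^{v-1}dt$ ($u,v>0$) is the Beta function and ${}_2F_1(a',b';c';z)=\frac{1}{\beta(b',c'-b')}\int_0^1t^{b'-1}(1-t)^{c'-b'-1}(1-zt)^{-a'}dt$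 ($c'>b'>0$, $|z|<1$) the hypergeometric function. For $\theta>0$, $p>1$: $A_4(\theta,\lambda,p)=\frac{1}{\theta p+1}$ if $\lambda=0$; $A_4(\theta,\lambda,p)=\frac{\lambda^{\frac{\theta p+1}{\theta}}}{\theta}\Big\{\beta\big(\tfrac1\theta,p+1\big)+\frac{(1-\lambda)^{p+1}}{p+1}\,{}_2F_1\big(\tfrac1\theta+p+1,\,p+1;\,p+2;\,1-\lambda\big)\Big\}$ if $0<\lambda<1$; $A_4(\theta,1,p)=\frac1\theta\beta\big(p+1,\tfrac1\theta\big)$. *)

theory Defs
  imports "HOL-Analysis.Analysis"
begin

definition pow0 :: "real \<Rightarrow> real \<Rightarrow> real" where
  "pow0 t e = (if t = 0 then (if e = 0 then 1 else 0) else t powr e)"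

definition alpha_m_convex_on :: "real \<Rightarrow> real \<Rightarrow> real set \<Rightarrow> (real \<Rightarrow> real) \<Rightarrow> bool" where
  "alpha_m_convex_on \<alpha> m K g \<longleftrightarrow>
     (\<forall>X\<in>K. \<forall>Y\<in>K. \<forall>t\<in>{0..1}. t * X + m * (1 - t) * Y \<in> K \<longrightarrow>
        g (t * X + m * (1 - t) * Y) \<le> pow0 t \<alpha> * g X + m * (1 - pow0 t \<alpha>) * g Y)"

text \<open>Gauss hypergeometric function via Euler's integral representation (c > b > 0, |z| < 1).\<close>
definition hyp2F1 :: "real \<Rightarrow> real \<Rightarrow> real \<Rightarrow> real \<Rightarrow> real" where
  "hyp2F1 a' b' c' z = (1 / Beta b' (c' - b')) *
     integral {0..1} (\<lambda>t. t powr (b' - 1) * (1 - t) powr (c' - b' - 1) * (1 - z * t) powr (- a'))"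

definition A4 :: "real \<Rightarrow> real \<Rightarrow> real \<Rightarrow> real" where
  "A4 \<theta> lam p =
    (if lam = 0 then 1 / (\<theta> * p + 1)
     else if lam < 1 then
       (lam powr ((\<theta> * p + 1) / \<theta>) / \<theta>) *
         (Beta (1 / \<theta>) (p + 1) +
          (1 - lam) powr (p + 1) / (p + 1) * hyp2F1 (1 / \<theta> + p + 1) (p + 1) (p + 2) (1 - lam))
     else (1 / \<theta>) * Beta (p + 1) (1 / \<theta>))"

end

theory Submission
  imports Defs
begin


lemma int_powr_left:
  fixes a b r :: real assumes "a \<le> b" "r \<ge> 0"
  shows "((\<lambda>t. (t - a) powr r) has_integral ((b - a) powr (r + 1) / (r + 1))) {a..b}"
proof -
  have "((\<lambda>t. (t - a) powr r) has_integral ((b - a) powr (r + 1) / (r + 1) - (a - a) powr (r + 1) / (r + 1))) {a..b}"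
  proof (rule fundamental_theorem_of_calculus_interior_strong[of "{}"])
    show "continuous_on {a..b} (\<lambda>t. (t - a) powr (r + 1) / (r + 1))"
      using assms by (intro continuous_intros continuous_on_powr') auto
    fix t assume t: "t \<in> {a<..<b} - {}"
    have "((\<lambda>t. (t - a) powr (r + 1) / (r + 1)) has_real_derivative
        ((r + 1) * (t - a) powr (r + 1 - of_nat 1) * 1) / (r + 1)) (at t)"
      by (intro DERIV_cdivide DERIV_fun_powr) (use t in \<open>auto intro!: derivative_eq_intros\<close>)
    then show "((\<lambda>t. (t - a) powr (r + 1) / (r + 1)) has_vector_derivative (t - a) powr r) (at t)"
      using assms by (simp add: has_real_derivative_iff_has_vector_derivative[symmetric])
  qed (use assms in auto)
  then show ?thesis by simp
qed

lemma int_powr_right: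
  fixes a b r :: real assumes "a \<le> b" "r \<ge> 0"
  shows "((\<lambda>t. (b - t) powr r) has_integral ((b - a) powr (r + 1) / (r + 1))) {a..b}"
proof -
  have "((\<lambda>t. (b - t) powr r) has_integral (- ((b - b) powr (r + 1)) / (r + 1) - (- ((b - a) powr (r + 1)) / (r + 1)))) {a..b}"
  proof (rule fundamental_theorem_of_calculus_interior_strong[of "{}"])
    show "continuous_on {a..b} (\<lambda>t. - ((b - t) powr (r + 1)) / (r + 1))"
      using assms by (intro continuous_intros continuous_on_powr') auto
    fix t assume t: "t \<in> {a<..<b} - {}"
    have "((\<lambda>t. - ((b - t) powr (r + 1)) / (r + 1)) has_real_derivative
        - ((r + 1) * (b - t) powr (r + 1 - of_nat 1) * (-1)) / (r + 1)) (at t)"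
      by (intro DERIV_cdivide DERIV_minus DERIV_fun_powr) (use t in \<open>auto intro!: derivative_eq_intros\<close>)
    then show "((\<lambda>t. - ((b - t) powr (r + 1)) / (r + 1)) has_vector_derivative (b - t) powr r) (at t)"
      using assms by (simp add: has_real_derivative_iff_has_vector_derivative[symmetric])
  qed (use assms in auto)
  then show ?thesis by simp
qed

lemma int_abs_powr:
  fixes lam p :: real assumes "0 \<le> lam" "lam \<le> 1" "p \<ge> 0"
  shows "((\<lambda>t. \<bar>t - lam\<bar> powr p) has_integral ((lam powr (p + 1) + (1 - lam) powr (p + 1)) / (p + 1))) {0..1}"
proof -
  have 1: "((\<lambda>t. \<bar>t - lam\<bar> powr p) has_integral (lam powr (p + 1) / (p + 1))) {0..lam}"
    by (rule has_integral_eq[OF _ int_powr_right[of 0 lam p, simplified]]) (use assms in auto)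
  have 2: "((\<lambda>t. \<bar>t - lam\<bar> powr p) has_integral ((1 - lam) powr (p + 1) / (p + 1))) {lam..1}"
    by (rule has_integral_eq[OF _ int_powr_left[of lam 1 p]]) (use assms in auto)
  show ?thesis
    using has_integral_combine[OF _ _ 1 2] assms by (simp add: add_divide_distrib)
qed

lemma int_pow0:
  fixes \<alpha> :: real assumes "0 \<le> \<alpha>"
  shows "((\<lambda>t. pow0 t \<alpha>) has_integral (1 / (\<alpha> + 1))) {0..1}"
proof -
  have "((\<lambda>t. (t - 0) powr \<alpha>) has_integral ((1 - 0) powr (\<alpha> + 1) / (\<alpha> + 1))) {0..1}"
    by (rule int_powr_left) (use assms in auto)
  then have "((\<lambda>t. t powr \<alpha>) has_integral (1 / (\<alpha> + 1))) {0..1}" by simp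
  then show ?thesis
    by (rule has_integral_spike_finite[of "{0}", rotated 2]) (auto simp: pow0_def)
qed



lemma Beta_1_left: fixes y :: real assumes "y > 0" shows "Beta 1 y = 1 / y"
proof -
  have "Gamma (y + 1) = y * Gamma y" by (rule Gamma_plus1) (use assms in \<open>auto elim!: nonpos_Ints_cases\<close>)
  moreover have "Gamma y > 0" using assms by (rule Gamma_real_pos)
  ultimately show ?thesis unfolding Beta_def by (simp add: add.commute)
qed

lemma int_hyp:
  fixes z p :: real assumes z: "0 \<le> z" "z < 1" and p: "p > 0"
  shows "((\<lambda>t. t powr p * (1 - z * t) powr (- (p + 2))) has_integral
          ((1 / (1 - z)) powr (p + 1) / (p + 1))) {0..1}"
proof -
  define K where "K t = (t / (1 - z * t)) powr (p + 1) / (p + 1)" for t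
  have pos: "1 - z * t > 0" if "t \<in> {0..1}" for t
  proof -
    have "z * t \<le> z" using that z by (simp add: mult_left_le)
    then show ?thesis using z by linarith
  qed
  have "((\<lambda>t. t powr p * (1 - z * t) powr (- (p + 2))) has_integral (K 1 - K 0)) {0..1}"
  proof (rule fundamental_theorem_of_calculus_interior_strong[of "{}"])
    show "continuous_on {0..1} K"
    proof -
      have c1: "continuous_on {0..1} (\<lambda>t. t / (1 - z * t))"
        by (intro continuous_intros) (use pos in \<open>metis less_irrefl\<close>)
      have "continuous_on {0..1} (\<lambda>t. (t / (1 - z * t)) powr (p + 1))"
        by (rule continuous_on_powr'[OF c1 continuous_on_const]) (use pos p in \<open>auto intro!: divide_nonneg_pos\<close>)
      then show ?thesis unfolding K_def by (rule continuous_on_divide[OF _ continuous_on_const]) (use p in auto)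
    qed
    fix t :: real assume t: "t \<in> {0<..<1} - {}"
    have pt: "1 - z * t > 0" using pos t by auto
    have "((\<lambda>t. t / (1 - z * t)) has_real_derivative ((1 * (1 - z * t) - t * (- z)) / (1 - z * t)^2)) (at t)"
      using pt by (auto intro!: derivative_eq_intros simp: power2_eq_square)
    then have d1: "((\<lambda>t. t / (1 - z * t)) has_real_derivative (1 / (1 - z * t)^2)) (at t)"
      by (simp add: algebra_simps)
    have "(K has_real_derivative ((p + 1) * (t / (1 - z * t)) powr (p + 1 - of_nat 1) * (1 / (1 - z * t)^2)) / (p + 1)) (at t)"
      unfolding K_def by (intro DERIV_cdivide DERIV_fun_powr d1) (use t pt in auto)
    moreover have "((p + 1) * (t / (1 - z * t)) powr (p + 1 - of_nat 1) * (1 / (1 - z * t)^2)) / (p + 1)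
        = t powr p * (1 - z * t) powr (- (p + 2))"
    proof -
      have "(1 - z * t) powr (- (p + 2)) = 1 / ((1 - z * t) powr p * (1 - z * t)^2)"
      proof -
        have "(1 - z * t) powr (p + 2) = (1 - z * t) powr p * (1 - z * t)^2"
          using pt by (simp add: powr_add powr_numeral)
        moreover have "(1 - z * t) powr (- (p + 2)) = inverse ((1 - z * t) powr (p + 2))"
          by (rule powr_minus)
        ultimately show ?thesis by (simp add: divide_inverse)
      qed
      note E = this
      have k: "p + 1 \<noteq> 0" using p by auto
      have "(t / (1 - z * t)) powr (p + 1 - of_nat 1) = t powr p / (1 - z * t) powr p"
        using t pt by (simp add: powr_divide)
      then show ?thesis unfolding E using k by simp
    qed
    ultimately show "(K has_vector_derivative t powr p * (1 - z * t) powr (- (p + 2))) (at t)"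
      by (simp add: has_real_derivative_iff_has_vector_derivative[symmetric])
  qed (use assms in auto)
  then show ?thesis using p z by (simp add: K_def)
qed

lemma A4_1:
  fixes lam p :: real assumes "0 \<le> lam" "lam \<le> 1" "p > 0"
  shows "A4 1 lam p = (lam powr (p + 1) + (1 - lam) powr (p + 1)) / (p + 1)"
proof -
  consider "lam = 0" | "0 < lam \<and> lam < 1" | "lam = 1" using assms by linarith
  then show ?thesis
  proof cases
    case 1 then show ?thesis using assms by (simp add: A4_def)
  next
    case 3 then show ?thesis using assms Beta_1_left[of "p+1"] by (simp add: A4_def Beta_commute)
  next
    case 2
    have "((\<lambda>t. t powr (p + 1 - 1) * (1 - t) powr (p + 2 - (p + 1) - 1) * (1 - (1 - lam) * t) powr (- (1 / 1 + p + 1)))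
       has_integral ((1 / (1 - (1 - lam))) powr (p + 1) / (p + 1))) {0..1}"
      by (rule has_integral_spike_finite[of "{1}", OF _ _ int_hyp[of "1 - lam" p]]) (use 2 assms in \<open>auto simp: algebra_simps\<close>)
    then have I: "integral {0..1} (\<lambda>t. t powr (p + 1 - 1) * (1 - t) powr (p + 2 - (p + 1) - 1) * (1 - (1 - lam) * t) powr (- (1 / 1 + p + 1)))
       = (1 / lam) powr (p + 1) / (p + 1)" by (simp add: integral_unique)
    have B: "Beta (p + 1) (p + 2 - (p + 1)) = 1 / (p + 1)"
      using Beta_1_left[of "p+1"] assms by (simp add: Beta_commute)
    have L: "lam powr (p + 1) * (1 / lam) powr (p + 1) = 1"
      using 2 by (simp add: powr_mult[symmetric])
    have "A4 1 lam p = lam powr (p + 1) * (1 / (p + 1) + (1 - lam) powr (p + 1) / (p + 1) * ((p + 1) * ((1 / lam) powr (p + 1) / (p + 1))))"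
      using 2 assms Beta_1_left[of "p+1"] unfolding A4_def hyp2F1_def I B by simp
    also have "\<dots> = lam powr (p + 1) / (p + 1) + (1 - lam) powr (p + 1) / (p + 1) * (lam powr (p + 1) * (1 / lam) powr (p + 1))"
    proof -
      have "p + 1 \<noteq> 0" using assms by simp
      then show ?thesis by (simp add: distrib_left mult_ac)
    qed
    finally show ?thesis using L by (simp add: add_divide_distrib)
  qed
qed



lemma young_opt:
  fixes p q P Q X :: real
  assumes pq: "p > 1" "q > 1" "1 / p + 1 / q = 1" and P: "P > 0" and Q: "Q \<ge> 0"
    and H: "\<And>c. c > 0 \<Longrightarrow> X \<le> c powr p * P / p + c powr (- q) * Q / q"
  shows "X \<le> P powr (1 / p) * Q powr (1 / q)"
proof (cases "Q = 0")
  case True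
  show ?thesis
  proof (rule ccontr)
    assume "\<not> ?thesis"
    then have X: "X > 0" using True by simp
    define c where "c = (X * p / (2 * P)) powr (1 / p)"
    have c: "c > 0" using X P pq by (simp add: c_def)
    have "c powr p = X * p / (2 * P)"
      unfolding c_def using X P pq by (simp add: powr_powr)
    then have eq: "c powr p * P / p = X / 2" using P pq by (simp add: field_simps)
    have "X \<le> c powr p * P / p" using H[OF c] True by simp
    then have "X \<le> X / 2" by (simp only: eq)
    then show False using X by simp
  qed
next
  case False
  then have Qp: "Q > 0" using Q by simp
  define u where "u = P powr (1 / p)"
  define v where "v = Q powr (1 / q)"
  have u: "u > 0" and v: "v > 0" using P Qp by (auto simp: u_def v_def)
  have Pu: "P = u powr p" unfolding u_def using P pq by (simp add: powr_powr)
  have Qv: "Q = v powr q" unfolding v_def using Qp pq by (simp add: powr_powr)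
  define c where "c = u powr (- 1 / q) * v powr (1 / p)"
  have c: "c > 0" using u v by (simp add: c_def)
  have cu: "c * u = (u * v) powr (1 / p)"
  proof -
    have "c * u = u powr (- 1 / q + 1) * v powr (1 / p)"
      by (subst powr_add) (use u in \<open>simp add: c_def\<close>)
    also have "- 1 / q + 1 = 1 / p" using pq by simp
    finally show ?thesis using u v by (simp add: powr_mult)
  qed
  have vc: "v / c = (u * v) powr (1 / q)"
  proof -
    have a: "v powr (1 - 1 / p) = v / v powr (1 / p)" using v by (simp add: powr_diff)
    have b: "u powr (- 1 / q) = inverse (u powr (1 / q))" using powr_minus[of u "1 / q"] by simp
    have "v / c = u powr (1 / q) * (v / v powr (1 / p))"
      unfolding c_def b using u v by (simp add: field_simps)
    then have "v / c = u powr (1 / q) * v powr (1 - 1 / p)" unfolding a .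
    also have "1 - 1 / p = 1 / q" using pq by simp
    finally show ?thesis using u v by (simp add: powr_mult)
  qed
  have "c powr p * P = (c * u) powr p" using c u Pu by (simp add: powr_mult)
  also have "\<dots> = u * v" unfolding cu using u v pq by (simp add: powr_powr)
  finally have 1: "c powr p * P = u * v" .
  have "(v / c) powr q = v powr q / c powr q" using c v by (intro powr_divide)
  then have "c powr (- q) * Q = (v / c) powr q" using c v Qv by (simp add: powr_minus divide_inverse)
  also have "\<dots> = u * v" unfolding vc using u v pq by (simp add: powr_powr)
  finally have 2: "c powr (- q) * Q = u * v" .
  have "X \<le> c powr p * P / p + c powr (- q) * Q / q" by (rule H[OF c])
  also have "\<dots> = u * v * (1 / p + 1 / q)" using 1 2 by (simp add: field_simps)
  finally show ?thesis using pq by (simp add: u_def v_def)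
qed



lemma side:
  fixes f f' F :: "real \<Rightarrow> real" and S :: "real set"
    and m x Y0 lam \<alpha> A B p q :: real
  defines "\<phi> \<equiv> \<lambda>t. t * (m * x) + m * (1 - t) * Y0"
  assumes phiS: "\<And>t. t \<in> {0..1} \<Longrightarrow> \<phi> t \<in> S"
    and hF: "\<And>y. y \<in> S \<Longrightarrow> (F has_real_derivative f y) (at y within S)"
    and hf: "\<And>y. y \<in> S \<Longrightarrow> (f has_real_derivative f' y) (at y)"
    and hconv: "\<And>t. t \<in> {0..1} \<Longrightarrow> \<bar>f' (\<phi> t)\<bar> powr q \<le> pow0 t \<alpha> * A + m * (1 - pow0 t \<alpha>) * B"
    and m: "m > 0" and \<alpha>: "\<alpha> \<ge> 0"
    and pq: "p > 1" "q > 1" "1 / p + 1 / q = 1"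
    and lam: "0 \<le> lam" "lam \<le> 1"
  shows "\<bar>(x - Y0) * (1 - lam) * f (m * x) + (x - Y0) * lam * f (m * Y0) - F (m * x) / m + F (m * Y0) / m\<bar>
     \<le> m * (x - Y0)^2 * ((lam powr (p + 1) + (1 - lam) powr (p + 1)) / (p + 1)) powr (1 / p)
         * ((A + \<alpha> * m * B) / (\<alpha> + 1)) powr (1 / q)"
proof (cases "x = Y0")
  case True
  then show ?thesis by simp
next
  case False
  define s where "s = x - Y0"
  have s: "s \<noteq> 0" using False by (simp add: s_def)
  define P where "P = (lam powr (p + 1) + (1 - lam) powr (p + 1)) / (p + 1)"
  define Q where "Q = (A + \<alpha> * m * B) / (\<alpha> + 1)"
  define G where "G t = s * (t - lam) * f (\<phi> t) - F (\<phi> t) / m" for t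
  define h where "h t = (t - lam) * f' (\<phi> t)" for t
  have phi_der: "(\<phi> has_real_derivative (m * s)) (at t within T)" for t T
    unfolding \<phi>_def s_def by (auto intro!: derivative_eq_intros simp: algebra_simps)
  have G_der: "(G has_real_derivative (m * s^2 * h t)) (at t within {0..1})" if t: "t \<in> {0..1}" for t
  proof -
    have y: "\<phi> t \<in> S" using phiS t .
    have d1: "((\<lambda>t. f (\<phi> t)) has_real_derivative f' (\<phi> t) * (m * s)) (at t within {0..1})"
      by (rule DERIV_chain2[OF hf[OF y] phi_der])
    have "(F has_real_derivative f (\<phi> t)) (at (\<phi> t) within \<phi> ` {0..1})"
      by (rule DERIV_subset[OF hF[OF y]]) (use phiS in auto)
    then have d2: "((\<lambda>t. F (\<phi> t)) has_real_derivative f (\<phi> t) * (m * s)) (at t within {0..1})"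
      using DERIV_image_chain[OF _ phi_der] by (simp add: o_def)
    have d0: "((\<lambda>z. z - lam) has_real_derivative 1) (at t within {0..1})"
      by (auto intro!: derivative_eq_intros)
    have d3: "((\<lambda>z. (z - lam) * f (\<phi> z)) has_real_derivative (t - lam) * (f' (\<phi> t) * (m * s)) + 1 * f (\<phi> t)) (at t within {0..1})"
      by (rule DERIV_mult'[OF d0 d1])
    have "(G has_real_derivative (s * ((t - lam) * (f' (\<phi> t) * (m * s)) + 1 * f (\<phi> t)) - f (\<phi> t) * (m * s) / m)) (at t within {0..1})"
      unfolding G_def mult.assoc by (intro DERIV_diff DERIV_cmult DERIV_cdivide d3 d2)
    moreover have "s * ((t - lam) * (f' (\<phi> t) * (m * s)) + 1 * f (\<phi> t)) - f (\<phi> t) * (m * s) / m = m * s^2 * h t"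
      using m by (simp add: h_def algebra_simps power2_eq_square)
    ultimately show ?thesis by simp
  qed
  have Gint: "((\<lambda>t. m * s^2 * h t) has_integral (G 1 - G 0)) {0..1}"
    by (rule fundamental_theorem_of_calculus) (use G_der in \<open>auto simp: has_real_derivative_iff_has_vector_derivative[symmetric]\<close>)
  have ms: "m * s^2 \<noteq> 0" using m s by simp
  have hint: "(h has_integral ((G 1 - G 0) / (m * s^2))) {0..1}"
    using has_integral_cmul[OF Gint, of "1 / (m * s^2)"] ms by simp
  have lhs: "(x - Y0) * (1 - lam) * f (m * x) + (x - Y0) * lam * f (m * Y0) - F (m * x) / m + F (m * Y0) / m = G 1 - G 0"
    unfolding G_def \<phi>_def s_def by (simp add: algebra_simps)
  have Pint: "((\<lambda>t. \<bar>t - lam\<bar> powr p) has_integral P) {0..1}"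
    unfolding P_def by (rule int_abs_powr) (use lam pq in auto)
  have Qint: "((\<lambda>t. pow0 t \<alpha> * A + m * (1 - pow0 t \<alpha>) * B) has_integral Q) {0..1}"
  proof -
    have i1: "((\<lambda>t. pow0 t \<alpha>) has_integral (1 / (\<alpha> + 1))) {0..1}" by (rule int_pow0[OF \<alpha>])
    have i2: "((\<lambda>t::real. 1::real) has_integral 1) {0..1}"
      using has_integral_const_real[of "1::real" 0 1] by simp
    have "((\<lambda>t. pow0 t \<alpha> * A + (m * B) * (1 - pow0 t \<alpha>)) has_integral (1 / (\<alpha> + 1) * A + (m * B) * (1 - 1 / (\<alpha> + 1)))) {0..1}"
      by (intro has_integral_add has_integral_mult_left has_integral_mult_right has_integral_diff i1 i2)
    moreover have "1 / (\<alpha> + 1) * A + (m * B) * (1 - 1 / (\<alpha> + 1)) = Q"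
    proof -
      have a1: "\<alpha> + 1 \<noteq> 0" using \<alpha> by simp
      have "1 - 1 / (\<alpha> + 1) = \<alpha> / (\<alpha> + 1)" using a1 by (simp add: field_simps)
      then show ?thesis unfolding Q_def using a1 by (simp add: add_divide_distrib)
    qed
    ultimately show ?thesis by (simp add: algebra_simps)
  qed
  have Pp: "P > 0"
  proof -
    have "lam powr (p + 1) > 0 \<or> (1 - lam) powr (p + 1) > 0" using lam by auto
    then have "lam powr (p + 1) + (1 - lam) powr (p + 1) > 0"
      using powr_ge_zero[of lam "p + 1"] powr_ge_zero[of "1 - lam" "p + 1"] by linarith
    then show ?thesis unfolding P_def using pq by simp
  qed
  have Qn: "Q \<ge> 0"
    by (rule has_integral_nonneg[OF Qint]) (use hconv in \<open>force intro: order_trans[OF powr_ge_zero]\<close>)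
  have main: "\<bar>integral {0..1} h\<bar> \<le> c powr p * P / p + c powr (- q) * Q / q" if c: "c > 0" for c
  proof -
    have "norm (integral {0..1} h) \<le> integral {0..1} (\<lambda>t. c powr p / p * \<bar>t - lam\<bar> powr p + c powr (- q) / q * (pow0 t \<alpha> * A + m * (1 - pow0 t \<alpha>) * B))"
    proof (rule integral_norm_bound_integral)
      show "h integrable_on {0..1}" using hint by blast
      show "(\<lambda>t. c powr p / p * \<bar>t - lam\<bar> powr p + c powr (- q) / q * (pow0 t \<alpha> * A + m * (1 - pow0 t \<alpha>) * B)) integrable_on {0..1}"
        by (rule has_integral_integrable[OF has_integral_add[OF has_integral_mult_right[OF Pint] has_integral_mult_right[OF Qint]]])
      fix t :: real assume t: "t \<in> {0..1}"
      define U where "U = \<bar>t - lam\<bar>"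
      define V where "V = \<bar>f' (\<phi> t)\<bar>"
      have "norm (h t) = (c * U) * (V / c)" unfolding h_def U_def V_def using c by (simp add: abs_mult)
      also have "\<dots> \<le> (c * U) powr p / p + (V / c) powr q / q"
        by (rule Youngs_inequality) (use pq c in \<open>auto simp: U_def V_def\<close>)
      also have "(c * U) powr p = c powr p * U powr p" using c by (simp add: powr_mult U_def)
      also have "(V / c) powr q = c powr (- q) * V powr q"
      proof -
        have "(V / c) powr q = V powr q / c powr q" using c by (intro powr_divide)
        then show ?thesis by (simp add: powr_minus divide_inverse)
      qed
      also have "V powr q \<le> pow0 t \<alpha> * A + m * (1 - pow0 t \<alpha>) * B" unfolding V_def by (rule hconv[OF t])
      finally show "norm (h t) \<le> c powr p / p * \<bar>t - lam\<bar> powr p + c powr (- q) / q * (pow0 t \<alpha> * A + m * (1 - pow0 t \<alpha>) * B)"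
        using c pq by (simp add: U_def divide_right_mono mult_left_mono)
    qed
    also have "integral {0..1} (\<lambda>t. c powr p / p * \<bar>t - lam\<bar> powr p + c powr (- q) / q * (pow0 t \<alpha> * A + m * (1 - pow0 t \<alpha>) * B))
       = c powr p / p * P + c powr (- q) / q * Q"
      by (rule integral_unique[OF has_integral_add[OF has_integral_mult_right[OF Pint] has_integral_mult_right[OF Qint]]])
    finally show ?thesis by simp
  qed
  have "\<bar>integral {0..1} h\<bar> \<le> P powr (1 / p) * Q powr (1 / q)"
    by (rule young_opt[OF pq Pp Qn main])
  moreover have "G 1 - G 0 = m * s^2 * integral {0..1} h"
    using integral_unique[OF hint] ms by simp
  ultimately have "\<bar>G 1 - G 0\<bar> \<le> m * s^2 * (P powr (1 / p) * Q powr (1 / q))"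
    using m by (simp add: abs_mult mult_left_mono)
  then show ?thesis unfolding lhs by (simp add: P_def Q_def s_def mult_ac)
qed



lemma convex_pt:
  fixes t a x b :: real assumes "0 \<le> t" "t \<le> 1" "a \<le> x" "x \<le> b"
  shows "a \<le> t * x + (1 - t) * a" "t * x + (1 - t) * a \<le> b"
    "x \<le> t * x + (1 - t) * b" "t * x + (1 - t) * b \<le> b"
proof -
  have e1: "t * x + (1 - t) * a = a + t * (x - a)" by (simp add: algebra_simps)
  have "0 \<le> t * (x - a)" "t * (x - a) \<le> x - a" using assms by (auto intro: mult_left_le_one_le)
  then show "a \<le> t * x + (1 - t) * a" "t * x + (1 - t) * a \<le> b" unfolding e1 using assms by auto
  have e2: "t * x + (1 - t) * b = b - t * (b - x)" by (simp add: algebra_simps)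
  have "0 \<le> t * (b - x)" "t * (b - x) \<le> b - x" using assms by (auto intro: mult_left_le_one_le)
  then show "x \<le> t * x + (1 - t) * b" "t * x + (1 - t) * b \<le> b" unfolding e2 by auto
qed

theorem mainTheorem10:
  fixes f :: "real \<Rightarrow> real" and I :: "real set"
    and m \<alpha> a b q p x lam :: real
  assumes I_interval: "is_interval I" and I_nonneg: "I \<subseteq> {0..}"
    and f_diff: "\<forall>y\<in>interior I. f differentiable (at y)"
    and m: "0 < m" "m \<le> 1"
    and \<alpha>: "0 \<le> \<alpha>" "\<alpha> \<le> 1"
    and ab: "a < b"
    and ma_int: "m * a \<in> interior I" and b_int: "b \<in> interior I"
    and f'_int: "deriv f absolutely_integrable_on {m * a..m * b}"
    and conv: "alpha_m_convex_on \<alpha> m {m * a..b} (\<lambda>y. \<bar>deriv f y\<bar> powr q)"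
    and q: "q > 1" and p: "p = q / (q - 1)"
    and x: "x \<in> {a..b}" and lam: "lam \<in> {0..1}"
  shows "\<bar>(1 - lam) * f (m * x) + lam * (((x - a) * f (m * a) + (b - x) * f (m * b)) / (b - a))
            - (1 / (m * (b - a))) * integral {m * a..m * b} f\<bar>
         \<le> (m * A4 1 lam p powr (1 / p) / (b - a)) *
            ((x - a)^2 * ((\<bar>deriv f (m * x)\<bar> powr q + \<alpha> * m * \<bar>deriv f a\<bar> powr q) / (\<alpha> + 1)) powr (1 / q)
           + (b - x)^2 * ((\<bar>deriv f (m * x)\<bar> powr q + \<alpha> * m * \<bar>deriv f b\<bar> powr q) / (\<alpha> + 1)) powr (1 / q))"
proof -
  have lam01: "0 \<le> lam" "lam \<le> 1" using lam by auto
  have xab: "a \<le> x" "x \<le> b" using x by auto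
  have pq: "p > 1" "q > 1" "1 / p + 1 / q = 1"
    using q unfolding p by (auto simp: field_simps)
  have "m * a \<ge> 0" using ma_int interior_subset I_nonneg by fastforce
  then have a0: "a \<ge> 0" using m by (simp add: zero_le_mult_iff)
  have ma_a: "m * a \<le> a" using a0 m by (simp add: mult_left_le_one_le)
  have mb_b: "m * b \<le> b" using a0 ab m by (simp add: mult_left_le_one_le)
  have mab: "m * a \<le> m * b" using m ab by simp
  have intI: "is_interval (interior I)"
    using I_interval by (simp add: is_interval_convex_1 convex_interior)
  have sub: "{m * a..b} \<subseteq> interior I"
    using mem_is_interval_1_I[OF intI ma_int b_int] by auto
  define S where "S = {m * a..m * b}"
  have SI: "S \<subseteq> interior I" using sub mb_b unfolding S_def by auto
  have hf: "\<And>y. y \<in> S \<Longrightarrow> (f has_real_derivative deriv f y) (at y)"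
    using SI f_diff DERIV_deriv_iff_real_differentiable by blast
  have fcont: "continuous_on S f"
    using hf by (meson DERIV_continuous continuous_at_imp_continuous_on)
  define F where "F y = integral {m * a..y} f" for y
  have hF: "\<And>y. y \<in> S \<Longrightarrow> (F has_real_derivative f y) (at y within S)"
    unfolding F_def S_def using fcont unfolding S_def by (intro integral_has_real_derivative) auto
  have mx: "m * a \<le> m * x" "m * x \<le> m * b" using m xab by auto
  have mxb: "m * x \<le> b" using mx mb_b by linarith
  have Ssub: "S \<subseteq> {m * a..b}" using mb_b unfolding S_def by auto
  define Pv where "Pv = (lam powr (p + 1) + (1 - lam) powr (p + 1)) / (p + 1)"
  have A4v: "A4 1 lam p = Pv" unfolding Pv_def by (rule A4_1) (use lam01 pq in auto)
  let ?A = "\<bar>deriv f (m * x)\<bar> powr q"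
  let ?Ba = "\<bar>deriv f a\<bar> powr q"
  let ?Bb = "\<bar>deriv f b\<bar> powr q"
  have conv': "\<bar>deriv f (t * X + m * (1 - t) * Y)\<bar> powr q \<le> pow0 t \<alpha> * \<bar>deriv f X\<bar> powr q + m * (1 - pow0 t \<alpha>) * \<bar>deriv f Y\<bar> powr q"
    if "X \<in> {m * a..b}" "Y \<in> {m * a..b}" "t \<in> {0..1}" "t * X + m * (1 - t) * Y \<in> {m * a..b}" for X Y t
    using conv that unfolding alpha_m_convex_on_def by blast
  have phia: "t * (m * x) + m * (1 - t) * a \<in> S" if t: "t \<in> {0..1}" for t
  proof -
    have e: "t * (m * x) + m * (1 - t) * a = m * (t * x + (1 - t) * a)" by (simp add: algebra_simps)
    show ?thesis unfolding e S_def using convex_pt(1,2)[of t a x b] t xab m by auto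
  qed
  have phib: "t * (m * x) + m * (1 - t) * b \<in> S" if t: "t \<in> {0..1}" for t
  proof -
    have e: "t * (m * x) + m * (1 - t) * b = m * (t * x + (1 - t) * b)" by (simp add: algebra_simps)
    have "m * a \<le> m * x" using mx by simp
    then show ?thesis unfolding e S_def using convex_pt(3,4)[of t x x b] t xab m
      by (auto intro: order_trans)
  qed
  have E1: "\<bar>(x - a) * (1 - lam) * f (m * x) + (x - a) * lam * f (m * a) - F (m * x) / m + F (m * a) / m\<bar>
     \<le> m * (x - a)^2 * Pv powr (1 / p) * ((?A + \<alpha> * m * ?Ba) / (\<alpha> + 1)) powr (1 / q)"
    unfolding Pv_def
  proof (rule side[where S = S and f' = "deriv f"])
    fix t :: real assume t: "t \<in> {0..1}"
    show "t * (m * x) + m * (1 - t) * a \<in> S" by (rule phia[OF t])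
    show "\<bar>deriv f (t * (m * x) + m * (1 - t) * a)\<bar> powr q \<le> pow0 t \<alpha> * ?A + m * (1 - pow0 t \<alpha>) * ?Ba"
      by (rule conv') (use t mx mxb ma_a xab phia[OF t] Ssub ab a0 in auto)
  qed (use hF hf m \<alpha> pq lam01 in auto)
  have E2: "\<bar>(x - b) * (1 - lam) * f (m * x) + (x - b) * lam * f (m * b) - F (m * x) / m + F (m * b) / m\<bar>
     \<le> m * (x - b)^2 * Pv powr (1 / p) * ((?A + \<alpha> * m * ?Bb) / (\<alpha> + 1)) powr (1 / q)"
    unfolding Pv_def
  proof (rule side[where S = S and f' = "deriv f"])
    fix t :: real assume t: "t \<in> {0..1}"
    show "t * (m * x) + m * (1 - t) * b \<in> S" by (rule phib[OF t])
    show "\<bar>deriv f (t * (m * x) + m * (1 - t) * b)\<bar> powr q \<le> pow0 t \<alpha> * ?A + m * (1 - pow0 t \<alpha>) * ?Bb"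
      by (rule conv') (use t mx mxb ma_a xab phib[OF t] Ssub ab a0 in auto)
  qed (use hF hf m \<alpha> pq lam01 in auto)
  have Fa: "F (m * a) = 0" by (simp add: F_def)
  have Fb: "F (m * b) = integral {m * a..m * b} f" by (simp add: F_def)
  define L where "L = (1 - lam) * f (m * x) + lam * (((x - a) * f (m * a) + (b - x) * f (m * b)) / (b - a))
            - (1 / (m * (b - a))) * integral {m * a..m * b} f"
  have "L * (b - a) = ((x - a) * (1 - lam) * f (m * x) + (x - a) * lam * f (m * a) - F (m * x) / m + F (m * a) / m)
     - ((x - b) * (1 - lam) * f (m * x) + (x - b) * lam * f (m * b) - F (m * x) / m + F (m * b) / m)"
  proof -
    have D: "b - a \<noteq> 0" using ab by simp
    have "L * (b - a) = (1 - lam) * f (m * x) * (b - a) + lam * ((x - a) * f (m * a) + (b - x) * f (m * b))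
        - integral {m * a..m * b} f / m"
    proof -
      have t2: "lam * (((x - a) * f (m * a) + (b - x) * f (m * b)) / (b - a)) * (b - a)
          = lam * ((x - a) * f (m * a) + (b - x) * f (m * b))" using D by simp
      have t3: "(1 / (m * (b - a))) * integral {m * a..m * b} f * (b - a) = integral {m * a..m * b} f / m"
        using D m by simp
      show ?thesis unfolding L_def left_diff_distrib distrib_right t2 t3 by simp
    qed
    then show ?thesis unfolding Fa Fb by (simp add: algebra_simps)
  qed
  then have "\<bar>L\<bar> * (b - a) \<le> m * (x - a)^2 * Pv powr (1 / p) * ((?A + \<alpha> * m * ?Ba) / (\<alpha> + 1)) powr (1 / q)
      + m * (x - b)^2 * Pv powr (1 / p) * ((?A + \<alpha> * m * ?Bb) / (\<alpha> + 1)) powr (1 / q)"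
  proof -
    have "\<bar>L\<bar> * (b - a) = \<bar>L * (b - a)\<bar>" using ab by (simp add: abs_mult)
    also note \<open>L * (b - a) = _\<close>
    also note abs_triangle_ineq4
    finally show ?thesis using E1 E2 by linarith
  qed
  also have "\<dots> = (m * Pv powr (1 / p) / (b - a)) *
            ((x - a)^2 * ((?A + \<alpha> * m * ?Ba) / (\<alpha> + 1)) powr (1 / q)
           + (b - x)^2 * ((?A + \<alpha> * m * ?Bb) / (\<alpha> + 1)) powr (1 / q)) * (b - a)"
    using ab by (simp add: field_simps power2_commute)
  finally have "\<bar>L\<bar> \<le> (m * Pv powr (1 / p) / (b - a)) *
            ((x - a)^2 * ((?A + \<alpha> * m * ?Ba) / (\<alpha> + 1)) powr (1 / q)
           + (b - x)^2 * ((?A + \<alpha> * m * ?Bb) / (\<alpha> + 1)) powr (1 / q))"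
    using ab by (simp add: pos_le_divide_eq)
  then show ?thesis unfolding A4v L_def .
qed


end
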